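(* Let $p>1$ be an integer and let $u^{(p)}$ be the fixed point of the substitution $\varphi_p(L)=L^pS$, $\varphi_p(S)=M$, $\varphi_p(M)=L^{p-1}S$. Let $v,w$ be factors of $u^{(p)}$ with $|v|=|w|$. Then $\left||v|_L-|w|_L\right|\le 3$.
   Context: $u^{(p)}=\lim_{n\to\infty}\varphi_p^n(L)$ is the unique infinite word over $\{L,S,M\}$ fixed by $\varphi_p$. A factor is a finite contiguous subword; $|w|$ is the length and $|w|_a$ the number of occurrences of the letter $a$ in $w$. *)

theory Defs
  imports Main
begin

datatype letter = L | S | M

fun phi_letter :: "nat \<Rightarrow> letter \<Rightarrow> letter list" where
  "phi_letter p L = replicate p L @ [S]"
| "phi_letter p S = [M]"
| "phi_letter p M = replicate (p - 1) L @ [S]"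

definition phi :: "nat \<Rightarrow> letter list \<Rightarrow> letter list" where
  "phi p w = concat (map (phi_letter p) w)"

text \<open>The fixed point u^(p) = lim phi_p^n(L): its n-th letter is read off any
  iterate phi_p^k(L) long enough to contain position n (the iterates are
  successive prefixes since phi_p(L) begins with L).\<close>
definition u :: "nat \<Rightarrow> nat \<Rightarrow> letter" where
  "u p n = ((phi p ^^ (LEAST k. n < length ((phi p ^^ k) [L]))) [L]) ! n"

definition factor :: "nat \<Rightarrow> nat \<Rightarrow> nat \<Rightarrow> letter list" where
  "factor p i n = map (u p) [i..<i+n]"

definition occ :: "letter \<Rightarrow> letter list \<Rightarrow> nat" where
  "occ a w = length (filter (\<lambda>x. x = a) w)"

end

theory Submission
  imports Defs
begin

fun rr :: "nat \<Rightarrow> letter \<Rightarrow> nat" where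
  "rr p L = p" | "rr p S = 0" | "rr p M = p - 1"

fun nl :: "letter \<Rightarrow> letter" where
  "nl L = S" | "nl S = M" | "nl M = S"

definition nxt :: "nat \<Rightarrow> letter \<Rightarrow> nat \<Rightarrow> letter" where
  "nxt p a q = (if q < rr p a then L else nl a)"

lemma phi_letter_eq: "phi_letter p a = replicate (rr p a) L @ [nl a]"
  by (cases a) auto

lemma length_phi_letter: "length (phi_letter p a) = Suc (rr p a)"
  by (simp add: phi_letter_eq)

lemma phi_letter_nth: "q \<le> rr p a \<Longrightarrow> phi_letter p a ! q = nxt p a q"
  by (auto simp: phi_letter_eq nxt_def nth_append)

lemma phi_Nil[simp]: "phi p [] = []" by (simp add: phi_def)
lemma phi_Cons[simp]: "phi p (a # xs) = phi_letter p a @ phi p xs" by (simp add: phi_def)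
lemma phi_append[simp]: "phi p (xs @ ys) = phi p xs @ phi p ys" by (simp add: phi_def)
lemma phi_single: "phi p [a] = phi_letter p a" by simp

definition wd :: "nat \<Rightarrow> nat \<Rightarrow> letter list" where
  "wd p k = (phi p ^^ k) [L]"

lemma wd_0: "wd p 0 = [L]" by (simp add: wd_def)
lemma wd_Suc: "wd p (Suc k) = phi p (wd p k)" by (simp add: wd_def)

lemma wd_prefix_Suc: assumes "p > 0" shows "\<exists>zs. wd p (Suc k) = wd p k @ zs"
proof (induction k)
  case 0
  have "phi_letter p L = [L] @ (replicate (p - 1) L @ [S])"
    using assms by (cases p) auto
  then show ?case by (auto simp: wd_Suc wd_0)
next
  case (Suc k)
  then obtain zs where "wd p (Suc k) = wd p k @ zs" by blast
  then have "wd p (Suc (Suc k)) = wd p (Suc k) @ phi p zs"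
    by (simp add: wd_Suc)
  then show ?case by blast
qed

lemma wd_prefix: assumes "p > 0" "k \<le> j" shows "\<exists>zs. wd p j = wd p k @ zs"
  using assms(2)
proof (induction j rule: dec_induct)
  case base then show ?case by simp
next
  case (step j)
  then obtain zs where "wd p j = wd p k @ zs" by blast
  moreover obtain ys where "wd p (Suc j) = wd p j @ ys" using wd_prefix_Suc[OF assms(1)] by blast
  ultimately show ?case by auto
qed

lemma length_phi_ge: "length (phi p xs) \<ge> length xs"
  by (induction xs) (auto simp: length_phi_letter)

lemma wd_hd: assumes "p > 0" shows "wd p k ! 0 = L"
proof -
  obtain zs where "wd p k = wd p 0 @ zs" using wd_prefix[OF assms, of 0 k] by auto
  then show ?thesis by (simp add: wd_0)
qed

lemma wd_length: assumes "p > 0" shows "length (wd p k) > k"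
proof (induction k)
  case 0 then show ?case by (simp add: wd_0)
next
  case (Suc k)
  obtain zs where z: "wd p k = L # zs"
    using wd_hd[OF assms, of k] Suc by (cases "wd p k") auto
  have "length (wd p (Suc k)) = length (phi_letter p L) + length (phi p zs)"
    by (simp add: wd_Suc z)
  also have "\<dots> \<ge> Suc p + length zs" using length_phi_ge[of zs p] by (simp add: length_phi_letter)
  finally show ?case using Suc z assms by simp
qed

lemma u_wd: assumes "p > 0" "n < length (wd p k)" shows "u p n = wd p k ! n"
proof -
  let ?k0 = "LEAST k. n < length ((phi p ^^ k) [L])"
  have ex: "n < length ((phi p ^^ k) [L])" using assms(2) by (simp add: wd_def)
  have le: "?k0 \<le> k" by (rule Least_le) (rule ex)
  have lt: "n < length (wd p ?k0)" using LeastI[of "\<lambda>k. n < length ((phi p ^^ k) [L])", OF ex]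
    by (simp add: wd_def)
  obtain zs where "wd p k = wd p ?k0 @ zs" using wd_prefix[OF assms(1) le] by blast
  then have "wd p k ! n = wd p ?k0 ! n" using lt by (simp add: nth_append)
  then show ?thesis by (simp add: u_def wd_def)
qed

lemma map_u_take: assumes "p > 0" "m \<le> length (wd p k)"
  shows "map (u p) [0..<m] = take m (wd p k)"
  using assms by (intro nth_equalityI) (auto simp: u_wd)

definition lam :: "nat \<Rightarrow> nat \<Rightarrow> nat" where
  "lam p k = length (phi p (map (u p) [0..<k]))"

lemma lam_Suc: "lam p (Suc k) = lam p k + Suc (rr p (u p k))"
  by (simp add: lam_def length_phi_letter)

lemma lam_0[simp]: "lam p 0 = 0" by (simp add: lam_def)

lemma u_phi_prefix: assumes "p > 0" "i < lam p k"
  shows "u p i = phi p (map (u p) [0..<k]) ! i"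
proof -
  have kl: "k \<le> length (wd p k)" using wd_length[OF assms(1), of k] by simp
  have "map (u p) [0..<k] = take k (wd p k)" by (rule map_u_take[OF assms(1) kl])
  then have "wd p k = map (u p) [0..<k] @ drop k (wd p k)" by simp
  then have w: "wd p (Suc k) = phi p (map (u p) [0..<k]) @ phi p (drop k (wd p k))"
    by (metis phi_append wd_Suc)
  have "i < length (wd p (Suc k))" using assms(2) by (simp add: w lam_def)
  then have "u p i = wd p (Suc k) ! i" by (rule u_wd[OF assms(1)])
  then show ?thesis using assms(2) by (simp add: w nth_append lam_def)
qed

lemma u_block: assumes "p > 0" "q \<le> rr p (u p k)"
  shows "u p (lam p k + q) = nxt p (u p k) q"
proof -
  have "lam p k + q < lam p (Suc k)" using assms(2) by (simp add: lam_Suc)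
  then have "u p (lam p k + q) = phi p (map (u p) [0..<Suc k]) ! (lam p k + q)"
    by (rule u_phi_prefix[OF assms(1)])
  also have "\<dots> = phi_letter p (u p k) ! q" by (simp add: nth_append lam_def)
  also have "\<dots> = nxt p (u p k) q" by (rule phi_letter_nth[OF assms(2)])
  finally show ?thesis .
qed

lemma u_0: assumes "p > 0" shows "u p 0 = L"
  using u_wd[OF assms, of 0 0] by (simp add: wd_0)

lemma occ_Nil[simp]: "occ a [] = 0" by (simp add: occ_def)
lemma occ_Cons[simp]: "occ a (x # xs) = (if x = a then 1 else 0) + occ a xs" by (simp add: occ_def)
lemma occ_append[simp]: "occ a (xs @ ys) = occ a xs + occ a ys" by (simp add: occ_def)
lemma occ_replicate_L: "occ a (replicate n L) = (if a = L then n else 0)"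
  by (induction n) auto

lemma length_occ: "length xs = occ L xs + occ S xs + occ M xs"
proof (induction xs)
  case (Cons x xs) then show ?case by (cases x) auto
qed simp

lemma occ_phi_L: "occ L (phi p xs) = p * occ L xs + (p - 1) * occ M xs"
proof (induction xs)
  case (Cons x xs) then show ?case by (cases x) (auto simp: phi_letter_eq occ_replicate_L)
qed simp
lemma occ_phi_S: "occ S (phi p xs) = occ L xs + occ M xs"
proof (induction xs)
  case (Cons x xs) then show ?case by (cases x) (auto simp: phi_letter_eq occ_replicate_L)
qed simp
lemma occ_phi_M: "occ M (phi p xs) = occ S xs"
proof (induction xs)
  case (Cons x xs) then show ?case by (cases x) (auto simp: phi_letter_eq occ_replicate_L)
qed simp

definition cnt :: "nat \<Rightarrow> letter \<Rightarrow> nat \<Rightarrow> int" where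
  "cnt p a n = int (occ a (map (u p) [0..<n]))"

lemma prefix_block: assumes "p > 0" "q \<le> rr p (u p k)"
  shows "map (u p) [0..<lam p k + q] = phi p (map (u p) [0..<k]) @ replicate q L"
proof (rule nth_equalityI)
  show "length (map (u p) [0..<lam p k + q]) = length (phi p (map (u p) [0..<k]) @ replicate q L)"
    by (simp add: lam_def)
next
  fix i assume "i < length (map (u p) [0..<lam p k + q])"
  then have i: "i < lam p k + q" by simp
  show "map (u p) [0..<lam p k + q] ! i = (phi p (map (u p) [0..<k]) @ replicate q L) ! i"
  proof (cases "i < lam p k")
    case True
    then show ?thesis using u_phi_prefix[OF assms(1) True] i by (simp add: nth_append lam_def)
  next
    case False
    then obtain j where j: "i = lam p k + j" "j < q" using i by (metis add_diff_inverse_nat nat_add_left_cancel_less)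
    have "u p i = nxt p (u p k) j" using u_block[OF assms(1), of j k] assms(2) j by simp
    also have "\<dots> = L" using j assms(2) by (simp add: nxt_def)
    finally show ?thesis using j by (simp add: nth_append lam_def)
  qed
qed

lemma cnt_block:
  assumes "p > 0" "q \<le> rr p (u p k)"
  shows "cnt p S (lam p k + q) = int k - cnt p S k"
    and "cnt p M (lam p k + q) = cnt p S k"
    and "int (lam p k + q) = (int p + 1) * int k - int p * cnt p S k - cnt p M k + int q"
proof -
  let ?xs = "map (u p) [0..<k]"
  have pb: "map (u p) [0..<lam p k + q] = phi p ?xs @ replicate q L" by (rule prefix_block[OF assms])
  have len: "k = occ L ?xs + occ S ?xs + occ M ?xs" using length_occ[of ?xs] by simp
  show "cnt p S (lam p k + q) = int k - cnt p S k"
    using len by (simp add: cnt_def pb occ_phi_S occ_replicate_L)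
  show "cnt p M (lam p k + q) = cnt p S k"
    by (simp add: cnt_def pb occ_phi_M occ_replicate_L)
  have "lam p k = occ L (phi p ?xs) + occ S (phi p ?xs) + occ M (phi p ?xs)"
    using length_occ[of "phi p ?xs"] by (simp add: lam_def)
  also have "\<dots> = p * occ L ?xs + (p - 1) * occ M ?xs + (occ L ?xs + occ M ?xs) + occ S ?xs"
    by (simp add: occ_phi_L occ_phi_S occ_phi_M)
  finally have "int (lam p k) = int p * int (occ L ?xs) + (int p - 1) * int (occ M ?xs)
      + (int (occ L ?xs) + int (occ M ?xs)) + int (occ S ?xs)"
    using assms(1) by (simp add: of_nat_diff)
  moreover have kk: "int k = int (occ L ?xs) + int (occ S ?xs) + int (occ M ?xs)" using len by simp
  ultimately show "int (lam p k + q) = (int p + 1) * int k - int p * cnt p S k - cnt p M k + int q"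
    unfolding cnt_def kk by (simp add: algebra_simps)
qed

lemma lam_mono: "k' \<le> k \<Longrightarrow> lam p k' + (k - k') \<le> lam p k"
proof (induction k rule: dec_induct)
  case base then show ?case by simp
next
  case (step k) then show ?case by (simp add: lam_Suc Suc_diff_le)
qed

lemma lam_ge: assumes "p > 0" "k > 0" shows "lam p k \<ge> k + p"
proof -
  have "lam p 1 = Suc p" using u_0[OF assms(1)] by (simp add: lam_Suc)
  moreover have "lam p 1 + (k - 1) \<le> lam p k" using lam_mono[of 1 k p] assms by simp
  ultimately show ?thesis using assms by simp
qed

lemma decomp: assumes "p > 0"
  shows "\<exists>k q. q \<le> rr p (u p k) \<and> n = lam p k + q"
proof (induction n)
  case 0 then show ?case by (rule exI[of _ 0], rule exI[of _ 0]) simp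
next
  case (Suc n)
  then obtain k q where kq: "q \<le> rr p (u p k)" "n = lam p k + q" by blast
  show ?case
  proof (cases "q < rr p (u p k)")
    case True then show ?thesis using kq by (intro exI[of _ k] exI[of _ "Suc q"]) auto
  next
    case False
    then have "Suc n = lam p (Suc k) + 0" using kq by (simp add: lam_Suc)
    then show ?thesis by blast
  qed
qed

lemma decomp_lt: assumes "p > 0" "n = lam p k + q" "n > 0" shows "k < n"
proof (cases "k = 0")
  case True then show ?thesis using assms by simp
next
  case False then show ?thesis using lam_ge[OF assms(1), of k] assms by simp
qed

lemma decomp_0: assumes "p > 0" "0 = lam p k + q" shows "k = 0"
  using lam_ge[OF assms(1), of k] assms by (cases "k = 0") auto

lemma cnt_0[simp]: "cnt p a 0 = 0" by (simp add: cnt_def)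

lemma lam_int: "p > 0 \<Longrightarrow> int (lam p k) = (int p + 1) * int k - int p * cnt p S k - cnt p M k"
  using cnt_block(3)[of p 0 k] by simp

lemma main_inv:
  fixes I :: "int \<Rightarrow> int \<Rightarrow> int \<Rightarrow> letter \<Rightarrow> letter \<Rightarrow> letter \<Rightarrow> letter \<Rightarrow> bool" and K :: int
  assumes p: "p > 0" and K: "K \<ge> 0"
  and base: "I 0 0 0 L L L L"
  and step: "\<And>E Sp Mp la lb lc le oa ob oc oe. I E Sp Mp la lb lc le \<Longrightarrow>
      oa \<le> rr p la \<Longrightarrow> ob \<le> rr p lb \<Longrightarrow> oc \<le> rr p lc \<Longrightarrow> oe \<le> rr p le \<Longrightarrow>
      \<bar>(int p + 1) * E - int p * Sp - Mp + int oc + int ob - int oa - int oe\<bar> \<le> K \<Longrightarrow>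
      I ((int p + 1) * E - int p * Sp - Mp + int oc + int ob - int oa - int oe) (E - Sp) Sp
        (nxt p la oa) (nxt p lb ob) (nxt p lc oc) (nxt p le oe)"
  and tp: "\<And>Sp Mp la lb lc le. I K Sp Mp la lb lc le \<Longrightarrow>
      (int p + 1) * K - int p * Sp - Mp - int (rr p la) - int (rr p le) \<ge> K"
  and tn: "\<And>Sp Mp la lb lc le. I (-K) Sp Mp la lb lc le \<Longrightarrow>
      (int p + 1) * (-K) - int p * Sp - Mp + int (rr p lb) + int (rr p lc) \<le> -K"
  shows "\<bar>int c - int e - int a + int b\<bar> \<le> K \<Longrightarrow>
    I (int c - int e - int a + int b)
      (cnt p S c - cnt p S e - cnt p S a + cnt p S b)
      (cnt p M c - cnt p M e - cnt p M a + cnt p M b)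
      (u p a) (u p b) (u p c) (u p e)"
proof (induction "a + b + c + e" arbitrary: a b c e rule: less_induct)
  case less
  show ?case
  proof (cases "a + b + c + e = 0")
    case True
    then have "a = 0" "b = 0" "c = 0" "e = 0" by auto
    then show ?thesis using base u_0[OF p] by simp
  next
    case False
    obtain ka oa where a: "oa \<le> rr p (u p ka)" "a = lam p ka + oa" using decomp[OF p] by blast
    obtain kb ob where b: "ob \<le> rr p (u p kb)" "b = lam p kb + ob" using decomp[OF p] by blast
    obtain kc oc where c: "oc \<le> rr p (u p kc)" "c = lam p kc + oc" using decomp[OF p] by blast
    obtain ke oe where e: "oe \<le> rr p (u p ke)" "e = lam p ke + oe" using decomp[OF p] by blast
    have lex: "\<And>x k q. x = lam p k + q \<Longrightarrow> k \<le> x \<and> (x > 0 \<longrightarrow> k < x)"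
    proof -
      fix x k q assume h: "x = lam p k + q"
      show "k \<le> x \<and> (x > 0 \<longrightarrow> k < x)"
      proof (cases "x = 0")
        case True then show ?thesis using decomp_0[OF p, of k q] h by simp
      next
        case False then show ?thesis using decomp_lt[OF p h] by simp
      qed
    qed
    have sumlt: "ka + kb + kc + ke < a + b + c + e"
      using lex[OF a(2)] lex[OF b(2)] lex[OF c(2)] lex[OF e(2)] False by auto
    define E where "E = int kc - int ke - int ka + int kb"
    define Sp where "Sp = cnt p S kc - cnt p S ke - cnt p S ka + cnt p S kb"
    define Mp where "Mp = cnt p M kc - cnt p M ke - cnt p M ka + cnt p M kb"
    note cb = cnt_block[OF p]
    have DD: "int c - int e - int a + int b
        = (int p + 1) * E - int p * Sp - Mp + int oc + int ob - int oa - int oe"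
      using cb(3)[OF a(1)] cb(3)[OF b(1)] cb(3)[OF c(1)] cb(3)[OF e(1)] a(2) b(2) c(2) e(2)
      unfolding E_def Sp_def Mp_def by (simp add: algebra_simps)
    have SS: "cnt p S c - cnt p S e - cnt p S a + cnt p S b = E - Sp"
      using cb(1)[OF a(1)] cb(1)[OF b(1)] cb(1)[OF c(1)] cb(1)[OF e(1)] a(2) b(2) c(2) e(2)
      unfolding E_def Sp_def by simp
    have MM: "cnt p M c - cnt p M e - cnt p M a + cnt p M b = Sp"
      using cb(2)[OF a(1)] cb(2)[OF b(1)] cb(2)[OF c(1)] cb(2)[OF e(1)] a(2) b(2) c(2) e(2)
      unfolding Sp_def by simp
    have lets: "u p a = nxt p (u p ka) oa" "u p b = nxt p (u p kb) ob"
      "u p c = nxt p (u p kc) oc" "u p e = nxt p (u p ke) oe"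
      using u_block[OF p] a b c e by auto
    have lamdiff: "int (lam p kc) - int (lam p ke) - int (lam p ka) + int (lam p kb)
        = (int p + 1) * E - int p * Sp - Mp"
      unfolding E_def Sp_def Mp_def lam_int[OF p] by (simp add: algebra_simps)
    have Dl: "int c - int e - int a + int b
        = int (lam p kc) - int (lam p ke) - int (lam p ka) + int (lam p kb) + int oc + int ob - int oa - int oe"
      using a(2) b(2) c(2) e(2) by simp
    show ?thesis
    proof (cases "\<bar>E\<bar> \<le> K")
      case True
      have "I E Sp Mp (u p ka) (u p kb) (u p kc) (u p ke)"
        using less.hyps[OF sumlt] True unfolding E_def Sp_def Mp_def by simp
      from step[OF this a(1) b(1) c(1) e(1)] less.prems
      show ?thesis unfolding DD SS MM lets by simp
    next
      case False
      show ?thesis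
      proof (cases "E > K")
        case True
        define t where "t = nat (E - K)"
        have tle: "t \<le> kc + kb" using True K unfolding t_def E_def by simp
        define kc' where "kc' = kc - min kc t"
        define kb' where "kb' = kb - (t - min kc t)"
        have E': "int kc' - int ke - int ka + int kb' = K"
          using tle True unfolding kc'_def kb'_def t_def E_def by (simp add: of_nat_diff)
        have lt2: "ka + kb' + kc' + ke < a + b + c + e" using sumlt unfolding kc'_def kb'_def by simp
        have "I (int kc' - int ke - int ka + int kb')
          (cnt p S kc' - cnt p S ke - cnt p S ka + cnt p S kb')
          (cnt p M kc' - cnt p M ke - cnt p M ka + cnt p M kb')
          (u p ka) (u p kb') (u p kc') (u p ke)"
          using less.hyps[OF lt2] E' K by simp
        then have h: "(int p + 1) * K - int p * (cnt p S kc' - cnt p S ke - cnt p S ka + cnt p S kb')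
            - (cnt p M kc' - cnt p M ke - cnt p M ka + cnt p M kb') - int (rr p (u p ka)) - int (rr p (u p ke)) \<ge> K"
          using tp E' by fastforce
        have lam': "int (lam p kc') - int (lam p ke) - int (lam p ka) + int (lam p kb')
            = (int p + 1) * K - int p * (cnt p S kc' - cnt p S ke - cnt p S ka + cnt p S kb')
            - (cnt p M kc' - cnt p M ke - cnt p M ka + cnt p M kb')"
        proof -
          have "(int p + 1) * (int kc' - int ke - int ka + int kb') = (int p + 1) * K" using E' by simp
          then show ?thesis unfolding lam_int[OF p] by (simp add: algebra_simps)
        qed
        have m1: "lam p kc' + (kc - kc') \<le> lam p kc" by (rule lam_mono) (simp add: kc'_def)
        have m2: "lam p kb' + (kb - kb') \<le> lam p kb" by (rule lam_mono) (simp add: kb'_def)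
        have tt: "(kc - kc') + (kb - kb') = t" using tle unfolding kc'_def kb'_def by simp
        have "int t \<ge> 1" using True unfolding t_def by simp
        then have "int c - int e - int a + int b > K"
          using Dl lam' h m1 m2 tt a(1) e(1) by linarith
        then show ?thesis using less.prems by simp
      next
        case False
        then have Em: "E < -K" using \<open>\<not> \<bar>E\<bar> \<le> K\<close> by simp
        define t where "t = nat (-K - E)"
        have tle: "t \<le> ka + ke" using Em K unfolding t_def E_def by simp
        define ka' where "ka' = ka - min ka t"
        define ke' where "ke' = ke - (t - min ka t)"
        have E': "int kc - int ke' - int ka' + int kb = -K"
          using tle Em unfolding ka'_def ke'_def t_def E_def by (simp add: of_nat_diff)
        have lt2: "ka' + kb + kc + ke' < a + b + c + e" using sumlt unfolding ka'_def ke'_def by simp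
        have "I (int kc - int ke' - int ka' + int kb)
          (cnt p S kc - cnt p S ke' - cnt p S ka' + cnt p S kb)
          (cnt p M kc - cnt p M ke' - cnt p M ka' + cnt p M kb)
          (u p ka') (u p kb) (u p kc) (u p ke')"
          using less.hyps[OF lt2] E' K by simp
        then have h: "(int p + 1) * (-K) - int p * (cnt p S kc - cnt p S ke' - cnt p S ka' + cnt p S kb)
            - (cnt p M kc - cnt p M ke' - cnt p M ka' + cnt p M kb) + int (rr p (u p kb)) + int (rr p (u p kc)) \<le> -K"
          using tn E' by fastforce
        have lam': "int (lam p kc) - int (lam p ke') - int (lam p ka') + int (lam p kb)
            = (int p + 1) * (-K) - int p * (cnt p S kc - cnt p S ke' - cnt p S ka' + cnt p S kb)
            - (cnt p M kc - cnt p M ke' - cnt p M ka' + cnt p M kb)"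
        proof -
          have "(int p + 1) * (int kc - int ke' - int ka' + int kb) = (int p + 1) * (-K)" using E' by simp
          then show ?thesis unfolding lam_int[OF p] by (simp add: algebra_simps)
        qed
        have m1: "lam p ka' + (ka - ka') \<le> lam p ka" by (rule lam_mono) (simp add: ka'_def)
        have m2: "lam p ke' + (ke - ke') \<le> lam p ke" by (rule lam_mono) (simp add: ke'_def)
        have tt: "(ka - ka') + (ke - ke') = t" using tle unfolding ka'_def ke'_def by simp
        have "int t \<ge> 1" using Em unfolding t_def by simp
        then have "int c - int e - int a + int b < -K"
          using Dl lam' h m1 m2 tt b(1) c(1) by linarith
        then show ?thesis using less.prems by simp
      qed
    qed
  qed
qed

fun w :: "nat \<Rightarrow> letter \<Rightarrow> int" where
  "w p L = 0" | "w p S = 1" | "w p M = 1 - int p"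

lemma vpos: assumes "q \<le> rr p a" "p \<ge> 2" shows "int q - w p (nxt p a q) \<le> int p - 1"
  using assms by (cases a) (auto simp: nxt_def)

lemma w_le1: "p \<ge> 1 \<Longrightarrow> w p a \<le> 1" by (cases a) auto

lemma wr: assumes "p \<ge> 1" shows "(int p + 1) * w p a + int (rr p a) \<le> int p + 1"
proof (cases a)
  case M
  have "int p * int p \<ge> 0" by simp
  then show ?thesis using M assms by (simp add: algebra_simps of_nat_diff)
qed auto

lemma wr2: assumes "p \<ge> 1" shows "int p * w p a + (int p + 1) * int (rr p a) \<le> int p * (int p + 1)"
proof (cases a)
  case S
  have "int p * int p \<ge> 0" by simp
  then show ?thesis using S by (simp add: algebra_simps)
next
  case M
  have "int p * int p \<ge> 0" by simp
  then show ?thesis using M assms by (simp add: algebra_simps of_nat_diff)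
qed (auto simp: algebra_simps)

definition I5 :: "nat \<Rightarrow> int \<Rightarrow> int \<Rightarrow> int \<Rightarrow> letter \<Rightarrow> letter \<Rightarrow> letter \<Rightarrow> letter \<Rightarrow> bool" where
  "I5 p D Sd Md la lb lc le \<longleftrightarrow> \<bar>D\<bar> \<le> 5 \<and> \<bar>Md\<bar> \<le> 2 \<and>
     -2 * int p - w p la - w p le \<le> D - (int p + 1) * Sd - Md \<and>
     D - (int p + 1) * Sd - Md \<le> 2 * int p + w p lb + w p lc"

lemma I5_base: "I5 p 0 0 0 L L L L" by (simp add: I5_def)

lemma I5_target: assumes "p \<ge> 2" "I5 p 0 Sd Md la lb lc le" shows "\<bar>Sd + Md\<bar> \<le> 3"
proof -
  define Y where "Y = (int p + 1) * Sd"
  have m: "\<bar>Md\<bar> \<le> 2" and lo: "-2 * int p - 2 \<le> - Y - Md"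
    and hi: "- Y - Md \<le> 2 * int p + 2"
    using assms w_le1[of p la] w_le1[of p lb] w_le1[of p lc] w_le1[of p le]
    unfolding I5_def Y_def by linarith+
  have "Sd + Md \<le> 3"
  proof (rule ccontr)
    assume "\<not> Sd + Md \<le> 3"
    then have "Sd \<ge> 2" "Sd \<ge> 3 \<or> Md \<ge> 1" using m by auto
    then have "Y \<ge> 2 * int p + 2" "Sd \<ge> 3 \<longrightarrow> Y \<ge> 3 * int p + 3"
      unfolding Y_def using mult_left_mono[of 2 Sd "int p + 1"] mult_left_mono[of 3 Sd "int p + 1"]
      by (auto simp: algebra_simps)
    then show False using lo m \<open>Sd \<ge> 3 \<or> Md \<ge> 1\<close> assms(1) by linarith
  qed
  moreover have "Sd + Md \<ge> -3"
  proof (rule ccontr)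
    assume "\<not> Sd + Md \<ge> -3"
    then have "Sd \<le> -2" "Sd \<le> -3 \<or> Md \<le> -1" using m by auto
    then have "Y \<le> -2 * int p - 2" "Sd \<le> -3 \<longrightarrow> Y \<le> -3 * int p - 3"
      unfolding Y_def using mult_left_mono[of Sd "-2" "int p + 1"] mult_left_mono[of Sd "-3" "int p + 1"]
      by (auto simp: algebra_simps)
    then show False using hi m \<open>Sd \<le> -3 \<or> Md \<le> -1\<close> assms(1) by linarith
  qed
  ultimately show ?thesis by simp
qed

lemma I5_step:
  assumes p: "p \<ge> 5" and I: "I5 p E Sp Mp la lb lc le"
    and o: "oa \<le> rr p la" "ob \<le> rr p lb" "oc \<le> rr p lc" "oe \<le> rr p le"
    and D: "\<bar>(int p + 1) * E - int p * Sp - Mp + int oc + int ob - int oa - int oe\<bar> \<le> 5"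
  shows "I5 p ((int p + 1) * E - int p * Sp - Mp + int oc + int ob - int oa - int oe) (E - Sp) Sp
        (nxt p la oa) (nxt p lb ob) (nxt p lc oc) (nxt p le oe)"
proof -
  define P where "P = int p"
  define X where "X = E - (P + 1) * Sp - Mp"
  define Dn where "Dn = (P + 1) * E - P * Sp - Mp + int oc + int ob - int oa - int oe"
  have P5: "P \<ge> 5" using p by (simp add: P_def)
  have Im: "\<bar>Mp\<bar> \<le> 2" and Xlo: "X \<ge> -2 * P - w p la - w p le" and Xhi: "X \<le> 2 * P + w p lb + w p lc"
    using I by (auto simp: I5_def X_def P_def)
  have Dfull: "Dn = (P*P + P + 1) * Sp + P * Mp + (P + 1) * X + int oc + int ob - int oa - int oe"
    unfolding Dn_def X_def by (simp add: algebra_simps)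
  have Dabs: "\<bar>Dn\<bar> \<le> 5" using D by (simp add: Dn_def P_def)
  have PP: "P * P \<ge> 5 * P" using P5 by (intro mult_right_mono) auto
  have PP0: "P * P \<ge> 0" by simp
  have wra: "(P + 1) * w p la + int (rr p la) \<le> P + 1" "(P + 1) * w p le + int (rr p le) \<le> P + 1"
    "(P + 1) * w p lb + int (rr p lb) \<le> P + 1" "(P + 1) * w p lc + int (rr p lc) \<le> P + 1"
    using wr[of p] p by (auto simp: P_def)
  have oi: "int oa \<le> int (rr p la)" "int ob \<le> int (rr p lb)" "int oc \<le> int (rr p lc)" "int oe \<le> int (rr p le)"
    "int oa \<ge> 0" "int ob \<ge> 0" "int oc \<ge> 0" "int oe \<ge> 0" using o by auto
  have Sp_hi: "Sp \<le> 2"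
  proof (rule ccontr)
    assume "\<not> Sp \<le> 2"
    then have "Sp \<ge> 3" by simp
    then have "(P*P + P + 1) * Sp \<ge> (P*P + P + 1) * 3" using PP0 P5 by (intro mult_left_mono) auto
    then have h1: "(P*P + P + 1) * Sp \<ge> 3 * (P*P) + 3 * P + 3" by (simp add: algebra_simps)
    have "(P + 1) * X \<ge> (P + 1) * (-2 * P - w p la - w p le)" using Xlo P5 by (intro mult_left_mono) auto
    then have h2: "(P + 1) * X \<ge> -2 * (P * P) - 2 * P - (P + 1) * w p la - (P + 1) * w p le"
      by (simp add: algebra_simps)
    have "P * Mp \<ge> P * (-2)" using Im P5 by (intro mult_left_mono) auto
    then have h3: "P * Mp \<ge> -2 * P" by simp
    have "Dn \<ge> 6" using Dfull h1 h2 h3 wra(1,2) PP oi P5 by linarith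
    then show False using Dabs by simp
  qed
  have Sp_lo: "Sp \<ge> -2"
  proof (rule ccontr)
    assume "\<not> Sp \<ge> -2"
    then have "Sp \<le> -3" by simp
    then have "(P*P + P + 1) * Sp \<le> (P*P + P + 1) * (-3)" using PP0 P5 by (intro mult_left_mono) auto
    then have h1: "(P*P + P + 1) * Sp \<le> -3 * (P*P) - 3 * P - 3" by (simp add: algebra_simps)
    have "(P + 1) * X \<le> (P + 1) * (2 * P + w p lb + w p lc)" using Xhi P5 by (intro mult_left_mono) auto
    then have h2: "(P + 1) * X \<le> 2 * (P * P) + 2 * P + (P + 1) * w p lb + (P + 1) * w p lc"
      by (simp add: algebra_simps)
    have "P * Mp \<le> P * 2" using Im P5 by (intro mult_left_mono) auto
    then have h3: "P * Mp \<le> 2 * P" by simp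
    have "Dn \<le> -6" using Dfull h1 h2 h3 wra(3,4) PP oi P5 by linarith
    then show False using Dabs by simp
  qed
  have Xn: "Dn - (P + 1) * (E - Sp) - Sp = int oc + int ob - int oa - int oe - Mp"
    unfolding Dn_def by (simp add: algebra_simps)
  have v: "int oa - w p (nxt p la oa) \<le> P - 1" "int ob - w p (nxt p lb ob) \<le> P - 1"
    "int oc - w p (nxt p lc oc) \<le> P - 1" "int oe - w p (nxt p le oe) \<le> P - 1"
    using vpos[of _ p] o p by (auto simp: P_def)
  show ?thesis
    unfolding I5_def P_def[symmetric] Dn_def[symmetric]
    using Dabs Sp_hi Sp_lo Xn v Im by auto
qed

lemma I5_tp: assumes p: "p \<ge> 5" and I: "I5 p 5 Sp Mp la lb lc le"
  shows "(int p + 1) * 5 - int p * Sp - Mp - int (rr p la) - int (rr p le) \<ge> 5"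
proof -
  define P where "P = int p"
  define X where "X = 5 - (P + 1) * Sp - Mp"
  have P5: "P \<ge> 5" using p by (simp add: P_def)
  have Im: "\<bar>Mp\<bar> \<le> 2" and Xlo: "X \<ge> -2 * P - w p la - w p le"
    using I by (auto simp: I5_def X_def P_def)
  define G where "G = 5 * P - P * Sp - Mp - int (rr p la) - int (rr p le)"
  have id: "(P + 1) * G = 5 * (P * P) + P * X - Mp - (P + 1) * int (rr p la) - (P + 1) * int (rr p le)"
    unfolding G_def X_def by (simp add: algebra_simps)
  have "P * X \<ge> P * (-2 * P - w p la - w p le)" using Xlo P5 by (intro mult_left_mono) auto
  then have h2: "P * X \<ge> -2 * (P * P) - P * w p la - P * w p le" by (simp add: algebra_simps)
  have w2: "P * w p la + (P + 1) * int (rr p la) \<le> P * P + P" "P * w p le + (P + 1) * int (rr p le) \<le> P * P + P"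
    using wr2[of p] p by (auto simp: P_def algebra_simps)
  have PP: "P * P \<ge> 5 * P" using P5 by (intro mult_right_mono) auto
  have "(P + 1) * G > 0" using id h2 w2 PP Im P5 by linarith
  then have "G > 0" using P5 by (simp add: zero_less_mult_iff)
  then show ?thesis unfolding G_def P_def by (simp add: algebra_simps)
qed

lemma I5_tn: assumes p: "p \<ge> 5" and I: "I5 p (-5) Sp Mp la lb lc le"
  shows "(int p + 1) * (-5) - int p * Sp - Mp + int (rr p lb) + int (rr p lc) \<le> -5"
proof -
  define P where "P = int p"
  define X where "X = -5 - (P + 1) * Sp - Mp"
  have P5: "P \<ge> 5" using p by (simp add: P_def)
  have Im: "\<bar>Mp\<bar> \<le> 2" and Xhi: "X \<le> 2 * P + w p lb + w p lc"
    using I by (auto simp: I5_def X_def P_def)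
  define G where "G = -5 * P - P * Sp - Mp + int (rr p lb) + int (rr p lc)"
  have id: "(P + 1) * G = -5 * (P * P) + P * X - Mp + (P + 1) * int (rr p lb) + (P + 1) * int (rr p lc)"
    unfolding G_def X_def by (simp add: algebra_simps)
  have "P * X \<le> P * (2 * P + w p lb + w p lc)" using Xhi P5 by (intro mult_left_mono) auto
  then have h2: "P * X \<le> 2 * (P * P) + P * w p lb + P * w p lc" by (simp add: algebra_simps)
  have w2: "P * w p lb + (P + 1) * int (rr p lb) \<le> P * P + P" "P * w p lc + (P + 1) * int (rr p lc) \<le> P * P + P"
    using wr2[of p] p by (auto simp: P_def algebra_simps)
  have PP: "P * P \<ge> 5 * P" using P5 by (intro mult_right_mono) auto
  have "(P + 1) * G < 0" using id h2 w2 PP Im P5 by linarith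
  then have "G < 0" using P5 by (simp add: mult_less_0_iff)
  then show ?thesis unfolding G_def P_def by (simp add: algebra_simps)
qed

lemma occ_factor: "cnt p a (i + n) = cnt p a i + int (occ a (factor p i n))"
proof -
  have "map (u p) [0..<i + n] = map (u p) [0..<i] @ factor p i n"
    by (simp add: factor_def upt_add_eq_append[of 0 i n])
  then show ?thesis by (simp add: cnt_def)
qed

lemma balance_from_inv:
  fixes I :: "int \<Rightarrow> int \<Rightarrow> int \<Rightarrow> letter \<Rightarrow> letter \<Rightarrow> letter \<Rightarrow> letter \<Rightarrow> bool"
  assumes inv: "\<And>a b c e. \<bar>int c - int e - int a + int b\<bar> \<le> K \<Longrightarrow>
    I (int c - int e - int a + int b)
      (cnt p S c - cnt p S e - cnt p S a + cnt p S b)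
      (cnt p M c - cnt p M e - cnt p M a + cnt p M b)
      (u p a) (u p b) (u p c) (u p e)"
  and K: "K \<ge> 0"
  and tgt: "\<And>Sd Md la lb lc le. I 0 Sd Md la lb lc le \<Longrightarrow> \<bar>Sd + Md\<bar> \<le> 3"
  shows "\<bar>int (occ L (factor p i n)) - int (occ L (factor p j n))\<bar> \<le> 3"
proof -
  have "I 0 (cnt p S (j+n) - cnt p S j - cnt p S (i+n) + cnt p S i)
      (cnt p M (j+n) - cnt p M j - cnt p M (i+n) + cnt p M i)
      (u p (i+n)) (u p i) (u p (j+n)) (u p j)"
    using inv[of "j+n" j "i+n" i] K by simp
  then have h: "\<bar>(cnt p S (j+n) - cnt p S j - cnt p S (i+n) + cnt p S i)
      + (cnt p M (j+n) - cnt p M j - cnt p M (i+n) + cnt p M i)\<bar> \<le> 3" by (rule tgt)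
  have li: "int n = int (occ L (factor p i n)) + int (occ S (factor p i n)) + int (occ M (factor p i n))"
    using length_occ[of "factor p i n"] by (simp add: factor_def)
  have lj: "int n = int (occ L (factor p j n)) + int (occ S (factor p j n)) + int (occ M (factor p j n))"
    using length_occ[of "factor p j n"] by (simp add: factor_def)
  show ?thesis using h li lj occ_factor[of p S i n] occ_factor[of p M i n]
      occ_factor[of p S j n] occ_factor[of p M j n] by linarith
qed

lemma big_p: assumes "p \<ge> 5"
  shows "\<bar>int (occ L (factor p i n)) - int (occ L (factor p j n))\<bar> \<le> 3"
proof (rule balance_from_inv[where I = "I5 p" and K = 5])
  fix a b c e
  show "\<bar>int c - int e - int a + int b\<bar> \<le> 5 \<Longrightarrow>
    I5 p (int c - int e - int a + int b)
      (cnt p S c - cnt p S e - cnt p S a + cnt p S b)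
      (cnt p M c - cnt p M e - cnt p M a + cnt p M b)
      (u p a) (u p b) (u p c) (u p e)"
    apply (rule main_inv[where I = "I5 p" and K = 5])
    using assms apply simp
          apply simp
         apply (rule I5_base)
        apply (rule I5_step[OF assms]; assumption)
       apply (rule I5_tp[OF assms]; assumption)
      apply (rule I5_tn[OF assms]; assumption)
     apply assumption
    done
next
  show "(5::int) \<ge> 0" by simp
next
  fix Sd Md la lb lc le
  show "I5 p 0 Sd Md la lb lc le \<Longrightarrow> \<bar>Sd + Md\<bar> \<le> 3" using I5_target[of p] assms by simp
qed

fun wt :: "int \<Rightarrow> letter \<Rightarrow> int" where
  "wt wm L = 0" | "wt wm S = 1" | "wt wm M = wm"

definition Itab :: "nat \<Rightarrow> int \<Rightarrow> int \<Rightarrow> (int \<Rightarrow> int \<Rightarrow> bool) \<Rightarrow> (int \<Rightarrow> int \<Rightarrow> int) \<Rightarrow> (int \<Rightarrow> int \<Rightarrow> int)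
   \<Rightarrow> int \<Rightarrow> int \<Rightarrow> int \<Rightarrow> letter \<Rightarrow> letter \<Rightarrow> letter \<Rightarrow> letter \<Rightarrow> bool" where
  "Itab p K wm kf xh xl D Sd Md la lb lc le \<longleftrightarrow> \<bar>D\<bar> \<le> K \<and> kf Sd Md \<and>
     xl Sd Md - wt wm la - wt wm le \<le> D - (int p + 1) * Sd - Md \<and>
     D - (int p + 1) * Sd - Md \<le> xh Sd Md + wt wm lb + wt wm lc"

definition letters :: "letter list" where "letters = [L, S, M]"

lemma in_letters: "x \<in> set letters" by (cases x) (auto simp: letters_def)

definition vv :: "nat \<Rightarrow> int \<Rightarrow> letter \<Rightarrow> nat \<Rightarrow> int" where
  "vv p wm a q = int q - wt wm (nxt p a q)"

definition fullU :: "nat \<Rightarrow> int \<Rightarrow> (int \<times> int \<times> int) list" where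
  "fullU p wm = concat (map (\<lambda>a. concat (map (\<lambda>b. concat (map (\<lambda>qa. map (\<lambda>qb.
      (wt wm a + wt wm b, int qa + int qb, vv p wm a qa + vv p wm b qb)) [0..<Suc (rr p b)])
      [0..<Suc (rr p a)])) letters)) letters)"

definition fullP :: "nat \<Rightarrow> int \<Rightarrow> (int \<times> int) list" where
  "fullP p wm = concat (map (\<lambda>a. map (\<lambda>b. (wt wm a + wt wm b, int (rr p a) + int (rr p b))) letters) letters)"

lemma mem_concat_map: "y \<in> set (f x) \<Longrightarrow> x \<in> set xs \<Longrightarrow> y \<in> set (concat (map f xs))"
  by auto

lemma fullU_mem: assumes "qa \<le> rr p a" "qb \<le> rr p b"
  shows "(wt wm a + wt wm b, int qa + int qb, vv p wm a qa + vv p wm b qb) \<in> set (fullU p wm)"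
proof -
  have qa: "qa \<in> set [0..<Suc (rr p a)]" and qb: "qb \<in> set [0..<Suc (rr p b)]" using assms by auto
  show ?thesis unfolding fullU_def
    apply (rule mem_concat_map[OF _ in_letters[of a]])
    apply (rule mem_concat_map[OF _ in_letters[of b]])
    apply (rule mem_concat_map[OF _ qa])
    using qb by (simp only: set_map) (rule imageI)
qed

lemma fullP_mem: "(wt wm a + wt wm b, int (rr p a) + int (rr p b)) \<in> set (fullP p wm)"
  using in_letters[of a] in_letters[of b] unfolding fullP_def by auto

definition chk_dom :: "nat \<Rightarrow> int \<Rightarrow> (int \<times> int \<times> int) list \<Rightarrow> (int \<times> int) list \<Rightarrow> bool" where
  "chk_dom p wm parU parP \<longleftrightarrow>
     (\<forall>(w1, u1, v1) \<in> set (fullU p wm). \<exists>(w2, u2, v2) \<in> set parU. w2 = w1 \<and> u2 = u1 \<and> v1 \<le> v2) \<and>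
     (\<forall>(w1, r1) \<in> set (fullP p wm). \<exists>(w2, r2) \<in> set parP. w1 \<le> w2 \<and> r1 \<le> r2) \<and>
     (\<forall>a \<in> set letters. wt wm a \<le> 1)"

definition chk_key :: "nat \<Rightarrow> int \<Rightarrow> (int \<Rightarrow> int \<Rightarrow> bool) \<Rightarrow> (int \<times> int) list \<Rightarrow> (int \<Rightarrow> int \<Rightarrow> int) \<Rightarrow> (int \<Rightarrow> int \<Rightarrow> int) \<Rightarrow> (int \<times> int) list \<Rightarrow> bool" where
  "chk_key p K kf klist xh xl parP \<longleftrightarrow>
    (\<forall>(s, m) \<in> set klist. \<forall>E \<in> set [-K..K]. \<forall>(w1, r1) \<in> set parP. \<forall>(w2, r2) \<in> set parP.
       (let X = E - (int p + 1) * s - m; G = (int p + 1) * E - int p * s - m in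
        (X \<le> xh s m + w1 \<and> xl s m - w2 \<le> X \<and> -K \<le> G + r1 \<and> G - r2 \<le> K) \<longrightarrow> kf (E - s) s))"

definition chk_U :: "nat \<Rightarrow> int \<Rightarrow> (int \<Rightarrow> int \<Rightarrow> bool) \<Rightarrow> (int \<times> int) list \<Rightarrow> (int \<Rightarrow> int \<Rightarrow> int) \<Rightarrow> (int \<Rightarrow> int \<Rightarrow> int) \<Rightarrow> (int \<times> int \<times> int) list \<Rightarrow> bool" where
  "chk_U p K kf klist xh xl parU \<longleftrightarrow>
    (\<forall>(s, m) \<in> set klist. \<forall>E \<in> set [-K..K]. kf (E - s) s \<longrightarrow> (\<forall>(w1, up, v) \<in> set parU.
       (let X = E - (int p + 1) * s - m; G = (int p + 1) * E - int p * s - m in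
        (X \<le> xh s m + w1 \<and> xl s m - 2 \<le> X \<and> -K \<le> G + up) \<longrightarrow> v - max 0 (G + up - K) - m \<le> xh (E - s) s)))"

definition chk_L :: "nat \<Rightarrow> int \<Rightarrow> (int \<Rightarrow> int \<Rightarrow> bool) \<Rightarrow> (int \<times> int) list \<Rightarrow> (int \<Rightarrow> int \<Rightarrow> int) \<Rightarrow> (int \<Rightarrow> int \<Rightarrow> int) \<Rightarrow> (int \<times> int \<times> int) list \<Rightarrow> bool" where
  "chk_L p K kf klist xh xl parU \<longleftrightarrow>
    (\<forall>(s, m) \<in> set klist. \<forall>E \<in> set [-K..K]. kf (E - s) s \<longrightarrow> (\<forall>(w1, dn, v) \<in> set parU.
       (let X = E - (int p + 1) * s - m; G = (int p + 1) * E - int p * s - m in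
        (xl s m - w1 \<le> X \<and> X \<le> xh s m + 2 \<and> G - dn \<le> K) \<longrightarrow> xl (E - s) s \<le> - v + max 0 (-K - (G - dn)) - m)))"

definition chk_T :: "nat \<Rightarrow> int \<Rightarrow> (int \<times> int) list \<Rightarrow> (int \<Rightarrow> int \<Rightarrow> int) \<Rightarrow> (int \<Rightarrow> int \<Rightarrow> int) \<Rightarrow> (int \<times> int) list \<Rightarrow> bool" where
  "chk_T p K klist xh xl parP \<longleftrightarrow>
    (\<forall>(s, m) \<in> set klist. \<forall>(w1, r1) \<in> set parP.
       (let X = K - (int p + 1) * s - m; G = (int p + 1) * K - int p * s - m in
        (xl s m - w1 \<le> X \<and> X \<le> xh s m + 2) \<longrightarrow> K \<le> G - r1) \<and>
       (let X = -K - (int p + 1) * s - m; G = (int p + 1) * (-K) - int p * s - m in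
        (xl s m - 2 \<le> X \<and> X \<le> xh s m + w1) \<longrightarrow> G + r1 \<le> -K))"

definition chk_tgt :: "nat \<Rightarrow> (int \<times> int) list \<Rightarrow> (int \<Rightarrow> int \<Rightarrow> int) \<Rightarrow> (int \<Rightarrow> int \<Rightarrow> int) \<Rightarrow> bool" where
  "chk_tgt p klist xh xl \<longleftrightarrow>
    (\<forall>(s, m) \<in> set klist. (let X = - ((int p + 1) * s) - m in
        (xl s m - 2 \<le> X \<and> X \<le> xh s m + 2) \<longrightarrow> \<bar>s + m\<bar> \<le> 3))"

lemma grid_mem: "((s, m) \<in> set (concat (map (\<lambda>s. map (\<lambda>m. (s, m)) ys) xs))) \<longleftrightarrow> s \<in> set xs \<and> m \<in> set ys"
  by auto

locale tabchk =
  fixes p :: nat and K wm :: int and kf :: "int \<Rightarrow> int \<Rightarrow> bool" and klist :: "(int \<times> int) list"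
    and xh xl :: "int \<Rightarrow> int \<Rightarrow> int" and parU :: "(int \<times> int \<times> int) list" and parP :: "(int \<times> int) list"
  assumes dom: "chk_dom p wm parU parP"
    and key: "chk_key p K kf klist xh xl parP"
    and cU: "chk_U p K kf klist xh xl parU"
    and cL: "chk_L p K kf klist xh xl parU"
    and cT: "chk_T p K klist xh xl parP"
    and cG: "chk_tgt p klist xh xl"
    and kl: "\<And>s m. kf s m \<Longrightarrow> (s, m) \<in> set klist"
    and Kp: "K \<ge> 0"
begin

lemma wt1: "wt wm a \<le> 1" using dom in_letters[of a] by (auto simp: chk_dom_def)

lemma domU: assumes "qa \<le> rr p a" "qb \<le> rr p b"
  obtains v where "(wt wm a + wt wm b, int qa + int qb, v) \<in> set parU" "vv p wm a qa + vv p wm b qb \<le> v"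
  using dom fullU_mem[OF assms, of wm] unfolding chk_dom_def by fastforce

lemma domP: obtains w1 r1 where "(w1, r1) \<in> set parP" "wt wm a + wt wm b \<le> w1" "int (rr p a) + int (rr p b) \<le> r1"
  using dom fullP_mem[of wm a b p] unfolding chk_dom_def by fastforce

lemma step:
  assumes I: "Itab p K wm kf xh xl E Sp Mp la lb lc le"
    and o: "oa \<le> rr p la" "ob \<le> rr p lb" "oc \<le> rr p lc" "oe \<le> rr p le"
    and D: "\<bar>(int p + 1) * E - int p * Sp - Mp + int oc + int ob - int oa - int oe\<bar> \<le> K"
  shows "Itab p K wm kf xh xl ((int p + 1) * E - int p * Sp - Mp + int oc + int ob - int oa - int oe) (E - Sp) Sp
        (nxt p la oa) (nxt p lb ob) (nxt p lc oc) (nxt p le oe)"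
proof -
  define X where "X = E - (int p + 1) * Sp - Mp"
  define G where "G = (int p + 1) * E - int p * Sp - Mp"
  define Dn where "Dn = (int p + 1) * E - int p * Sp - Mp + int oc + int ob - int oa - int oe"
  have DnG: "Dn = G + (int ob + int oc) - (int oa + int oe)" unfolding Dn_def G_def by simp
  have Dabs: "\<bar>Dn\<bar> \<le> K" using D by (simp add: Dn_def)
  have Ik: "kf Sp Mp" and IE: "\<bar>E\<bar> \<le> K" and Xlo: "xl Sp Mp - wt wm la - wt wm le \<le> X"
    and Xhi: "X \<le> xh Sp Mp + wt wm lb + wt wm lc"
    using I by (auto simp: Itab_def X_def)
  have skl: "(Sp, Mp) \<in> set klist" by (rule kl[OF Ik])
  have Er: "E \<in> set [-K..K]" using IE by auto
  have oi: "int oa \<le> int (rr p la)" "int ob \<le> int (rr p lb)" "int oc \<le> int (rr p lc)" "int oe \<le> int (rr p le)"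
    using o by auto
  obtain w1 r1 where P1: "(w1, r1) \<in> set parP" "wt wm lb + wt wm lc \<le> w1" "int (rr p lb) + int (rr p lc) \<le> r1"
    by (rule domP)
  obtain w2 r2 where P2: "(w2, r2) \<in> set parP" "wt wm la + wt wm le \<le> w2" "int (rr p la) + int (rr p le) \<le> r2"
    by (rule domP)
  have newk: "kf (E - Sp) Sp"
  proof -
    have "X \<le> xh Sp Mp + w1 \<and> xl Sp Mp - w2 \<le> X \<and> -K \<le> G + r1 \<and> G - r2 \<le> K"
      using Xhi Xlo P1 P2 Dabs DnG oi by auto
    then show ?thesis using key skl Er P1(1) P2(1) unfolding chk_key_def X_def G_def Let_def by fastforce
  qed
  obtain v1 where U1: "(wt wm lb + wt wm lc, int ob + int oc, v1) \<in> set parU"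
      "vv p wm lb ob + vv p wm lc oc \<le> v1" using domU[OF o(2,3)] by blast
  have upper: "v1 - max 0 (G + (int ob + int oc) - K) - Mp \<le> xh (E - Sp) Sp"
  proof -
    have "X \<le> xh Sp Mp + (wt wm lb + wt wm lc) \<and> xl Sp Mp - 2 \<le> X \<and> -K \<le> G + (int ob + int oc)"
      using Xhi Xlo wt1[of la] wt1[of le] Dabs DnG by auto
    then show ?thesis using cU skl Er newk U1(1) unfolding chk_U_def X_def G_def Let_def by fastforce
  qed
  obtain v2 where L1: "(wt wm la + wt wm le, int oa + int oe, v2) \<in> set parU"
      "vv p wm la oa + vv p wm le oe \<le> v2" using domU[OF o(1,4)] by blast
  have lower: "xl (E - Sp) Sp \<le> - v2 + max 0 (-K - (G - (int oa + int oe))) - Mp"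
  proof -
    have "xl Sp Mp - (wt wm la + wt wm le) \<le> X \<and> X \<le> xh Sp Mp + 2 \<and> G - (int oa + int oe) \<le> K"
      using Xhi Xlo wt1[of lb] wt1[of lc] Dabs DnG by auto
    then show ?thesis using cL skl Er newk L1(1) unfolding chk_L_def X_def G_def Let_def by fastforce
  qed
  have Xn: "Dn - (int p + 1) * (E - Sp) - Sp = int oc + int ob - int oa - int oe - Mp"
    unfolding Dn_def by (simp add: algebra_simps)
  have m1: "int oa + int oe \<ge> max 0 (G + (int ob + int oc) - K)" using Dabs DnG by auto
  have m2: "int ob + int oc \<ge> max 0 (-K - (G - (int oa + int oe)))" using Dabs DnG by auto
  have "Dn - (int p + 1) * (E - Sp) - Sp \<le> xh (E - Sp) Sp + wt wm (nxt p lb ob) + wt wm (nxt p lc oc)"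
    using Xn upper U1(2) m1 unfolding vv_def by linarith
  moreover have "xl (E - Sp) Sp - wt wm (nxt p la oa) - wt wm (nxt p le oe) \<le> Dn - (int p + 1) * (E - Sp) - Sp"
    using Xn lower L1(2) m2 unfolding vv_def by linarith
  ultimately show ?thesis using Dabs newk unfolding Itab_def Dn_def by auto
qed

lemma tp: assumes I: "Itab p K wm kf xh xl K Sp Mp la lb lc le"
  shows "(int p + 1) * K - int p * Sp - Mp - int (rr p la) - int (rr p le) \<ge> K"
proof -
  have Ik: "kf Sp Mp" and Xlo: "xl Sp Mp - wt wm la - wt wm le \<le> K - (int p + 1) * Sp - Mp"
    and Xhi: "K - (int p + 1) * Sp - Mp \<le> xh Sp Mp + wt wm lb + wt wm lc"
    using I by (auto simp: Itab_def)
  obtain w1 r1 where P1: "(w1, r1) \<in> set parP" "wt wm la + wt wm le \<le> w1" "int (rr p la) + int (rr p le) \<le> r1"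
    by (rule domP)
  have "xl Sp Mp - w1 \<le> K - (int p + 1) * Sp - Mp \<and> K - (int p + 1) * Sp - Mp \<le> xh Sp Mp + 2"
    using Xlo Xhi P1 wt1[of lb] wt1[of lc] by auto
  then have "K \<le> (int p + 1) * K - int p * Sp - Mp - r1"
    using cT kl[OF Ik] P1(1) unfolding chk_T_def Let_def by fastforce
  then show ?thesis using P1 by linarith
qed

lemma tn: assumes I: "Itab p K wm kf xh xl (-K) Sp Mp la lb lc le"
  shows "(int p + 1) * (-K) - int p * Sp - Mp + int (rr p lb) + int (rr p lc) \<le> -K"
proof -
  have Ik: "kf Sp Mp" and Xlo: "xl Sp Mp - wt wm la - wt wm le \<le> -K - (int p + 1) * Sp - Mp"
    and Xhi: "-K - (int p + 1) * Sp - Mp \<le> xh Sp Mp + wt wm lb + wt wm lc"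
    using I by (auto simp: Itab_def)
  obtain w1 r1 where P1: "(w1, r1) \<in> set parP" "wt wm lb + wt wm lc \<le> w1" "int (rr p lb) + int (rr p lc) \<le> r1"
    by (rule domP)
  have "xl Sp Mp - 2 \<le> -K - (int p + 1) * Sp - Mp \<and> -K - (int p + 1) * Sp - Mp \<le> xh Sp Mp + w1"
    using Xlo Xhi P1 wt1[of la] wt1[of le] by auto
  then have "(int p + 1) * (-K) - int p * Sp - Mp + r1 \<le> -K"
    using cT kl[OF Ik] P1(1) unfolding chk_T_def Let_def by fastforce
  then show ?thesis using P1 by linarith
qed

lemma target: assumes I: "Itab p K wm kf xh xl 0 Sd Md la lb lc le" shows "\<bar>Sd + Md\<bar> \<le> 3"
proof -
  have Ik: "kf Sd Md" and Xlo: "xl Sd Md - wt wm la - wt wm le \<le> 0 - (int p + 1) * Sd - Md"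
    and Xhi: "0 - (int p + 1) * Sd - Md \<le> xh Sd Md + wt wm lb + wt wm lc"
    using I by (auto simp: Itab_def)
  have "xl Sd Md - 2 \<le> - ((int p + 1) * Sd) - Md \<and> - ((int p + 1) * Sd) - Md \<le> xh Sd Md + 2"
    using Xlo Xhi wt1[of la] wt1[of le] wt1[of lb] wt1[of lc] by simp
  then show ?thesis using cG kl[OF Ik] unfolding chk_tgt_def Let_def by fastforce
qed

lemma balance:
  assumes p: "p > 0" and base: "kf 0 0" "xl 0 0 \<le> 0" "0 \<le> xh 0 0"
  shows "\<bar>int (occ L (factor p i n)) - int (occ L (factor p j n))\<bar> \<le> 3"
proof (rule balance_from_inv[where I = "Itab p K wm kf xh xl" and K = K])
  fix a b c e
  show "\<bar>int c - int e - int a + int b\<bar> \<le> K \<Longrightarrow>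
    Itab p K wm kf xh xl (int c - int e - int a + int b)
      (cnt p S c - cnt p S e - cnt p S a + cnt p S b)
      (cnt p M c - cnt p M e - cnt p M a + cnt p M b)
      (u p a) (u p b) (u p c) (u p e)"
    apply (rule main_inv[where I = "Itab p K wm kf xh xl" and K = K])
    using p apply simp
          apply (rule Kp)
         apply (simp add: Itab_def base Kp)
        apply (rule step; assumption)
       apply (rule tp; assumption)
      apply (rule tn; assumption)
     apply assumption
    done
next
  show "K \<ge> 0" by (rule Kp)
next
  fix Sd Md la lb lc le
  show "Itab p K wm kf xh xl 0 Sd Md la lb lc le \<Longrightarrow> \<bar>Sd + Md\<bar> \<le> 3" by (rule target)
qed

end

definition kf4 :: "int \<Rightarrow> int \<Rightarrow> bool" where "kf4 s m \<longleftrightarrow> \<bar>s\<bar> \<le> 3 \<and> \<bar>m\<bar> \<le> 3"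
definition kl4 :: "(int \<times> int) list" where "kl4 = concat (map (\<lambda>s. map (\<lambda>m. (s, m)) [-3..3]) [-3..3])"
definition xh4 :: "int \<Rightarrow> int \<Rightarrow> int" where "xh4 s m = (if m \<ge> -1 then 9 else if m = -2 then 8 else 5)"
definition xl4 :: "int \<Rightarrow> int \<Rightarrow> int" where "xl4 s m = (if m \<le> 1 then -9 else if m = 2 then -8 else -5)"
definition pU4 :: "(int \<times> int \<times> int) list" where
  "pU4 = [(-6, 0, 0), (-6, 1, 1), (-6, 2, 2), (-6, 3, 3), (-6, 4, 4), (-6, 5, 4), (-6, 6, 4), (-3, 0, 0), (-3, 1, 1), (-3, 2, 2), (-3, 3, 3), (-3, 4, 4), (-3, 5, 5), (-3, 6, 5), (-3, 7, 5), (-2, 0, 3), (-2, 1, 4), (-2, 2, 5), (-2, 3, 5), (0, 0, 0), (0, 1, 1), (0, 2, 2), (0, 3, 3), (0, 4, 4), (0, 5, 5), (0, 6, 6), (0, 7, 6), (0, 8, 6), (1, 0, 3), (1, 1, 4), (1, 2, 5), (1, 3, 6), (1, 4, 6), (2, 0, 6)]"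
definition pP4 :: "(int \<times> int) list" where "pP4 = [(0, 8), (1, 4), (2, 0)]"

lemma c4_dom: "chk_dom 4 (-3) pU4 pP4" by code_simp
lemma c4_key: "chk_key 4 5 kf4 kl4 xh4 xl4 pP4" by code_simp
lemma c4_U: "chk_U 4 5 kf4 kl4 xh4 xl4 pU4" by code_simp
lemma c4_L: "chk_L 4 5 kf4 kl4 xh4 xl4 pU4" by code_simp
lemma c4_T: "chk_T 4 5 kl4 xh4 xl4 pP4" by code_simp
lemma c4_tgt: "chk_tgt 4 kl4 xh4 xl4" by code_simp


lemma kl4_ok: "kf4 s m \<Longrightarrow> (s, m) \<in> set kl4"
  unfolding kl4_def grid_mem set_upto kf4_def by auto

interpretation t4: tabchk 4 5 "-3" kf4 kl4 xh4 xl4 pU4 pP4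
  by unfold_locales (use c4_dom c4_key c4_U c4_L c4_T c4_tgt kl4_ok in auto)

lemma p4: "\<bar>int (occ L (factor 4 i n)) - int (occ L (factor 4 j n))\<bar> \<le> 3"
  by (rule t4.balance) (auto simp: kf4_def xh4_def xl4_def)

definition kf3 :: "int \<Rightarrow> int \<Rightarrow> bool" where "kf3 s m \<longleftrightarrow> \<bar>s\<bar> \<le> 4 \<and> \<bar>m\<bar> \<le> 3"
definition kl3 :: "(int \<times> int) list" where "kl3 = concat (map (\<lambda>s. map (\<lambda>m. (s, m)) [-3..3]) [-4..4])"
definition xh3 :: "int \<Rightarrow> int \<Rightarrow> int" where "xh3 s m = (if m \<ge> -1 then 7 else if m = -2 then 6 else 4)"
definition xl3 :: "int \<Rightarrow> int \<Rightarrow> int" where "xl3 s m = (if m \<le> 1 then -7 else if m = 2 then -6 else -4)"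
definition pU3 :: "(int \<times> int \<times> int) list" where
  "pU3 = [(-4, 0, 0), (-4, 1, 1), (-4, 2, 2), (-4, 3, 2), (-4, 4, 2), (-2, 0, 0), (-2, 1, 1), (-2, 2, 2), (-2, 3, 3), (-2, 4, 3), (-2, 5, 3), (-1, 0, 2), (-1, 1, 3), (-1, 2, 3), (0, 0, 0), (0, 1, 1), (0, 2, 2), (0, 3, 3), (0, 4, 4), (0, 5, 4), (0, 6, 4), (1, 0, 2), (1, 1, 3), (1, 2, 4), (1, 3, 4), (2, 0, 4)]"
definition pP3 :: "(int \<times> int) list" where "pP3 = [(0, 6), (1, 3), (2, 0)]"

lemma c3_dom: "chk_dom 3 (-2) pU3 pP3" by code_simp
lemma c3_key: "chk_key 3 5 kf3 kl3 xh3 xl3 pP3" by code_simp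
lemma c3_U: "chk_U 3 5 kf3 kl3 xh3 xl3 pU3" by code_simp
lemma c3_L: "chk_L 3 5 kf3 kl3 xh3 xl3 pU3" by code_simp
lemma c3_T: "chk_T 3 5 kl3 xh3 xl3 pP3" by code_simp
lemma c3_tgt: "chk_tgt 3 kl3 xh3 xl3" by code_simp
lemma kl3_ok: "kf3 s m \<Longrightarrow> (s, m) \<in> set kl3"
  unfolding kl3_def grid_mem set_upto kf3_def by auto

interpretation t3: tabchk 3 5 "-2" kf3 kl3 xh3 xl3 pU3 pP3
  by unfold_locales (use c3_dom c3_key c3_U c3_L c3_T c3_tgt kl3_ok in auto)

lemma p3: "\<bar>int (occ L (factor 3 i n)) - int (occ L (factor 3 j n))\<bar> \<le> 3"
  by (rule t3.balance) (auto simp: kf3_def xh3_def xl3_def)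

definition T2 :: "(int \<times> int) option list list" where
  "T2 = [[None, None, None, None, None, Some (6, 8), Some (6, 7), None, None],
   [None, None, None, Some (5, 7), Some (6, 6), Some (6, 5), Some (6, 4), Some (5, 3), None],
   [None, None, Some (4, 5), Some (5, 4), Some (5, 3), Some (6, 2), Some (6, 1), Some (5, 1), None],
   [Some (2, 4), Some (3, 3), Some (3, 2), Some (4, 1), Some (5, 0), Some (5, -1), Some (6, -1), Some (5, 0), Some (5, 2)],
   [Some (1, 1), Some (2, 0), Some (3, -1), Some (4, -2), Some (4, -3), Some (5, -3), Some (5, -2), Some (5, -1), Some (5, 1)],
   [Some (0, -2), Some (1, -3), Some (2, -4), Some (3, -5), Some (4, -4), Some (5, -3), Some (4, -2), Some (3, -1), Some (2, 0)],
   [Some (-1, -5), Some (1, -5), Some (2, -5), Some (3, -5), Some (3, -4), Some (2, -4), Some (1, -3), Some (0, -2), Some (-1, -1)],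
   [Some (-2, -5), Some (0, -5), Some (1, -6), Some (1, -5), Some (0, -5), Some (-1, -4), Some (-2, -3), Some (-3, -3), Some (-4, -2)],
   [None, Some (-1, -5), Some (-1, -6), Some (-2, -6), Some (-3, -5), Some (-4, -5), Some (-5, -4), None, None],
   [None, Some (-3, -5), Some (-4, -6), Some (-5, -6), Some (-6, -6), Some (-7, -5), None, None, None],
   [None, None, Some (-7, -6), Some (-8, -6), None, None, None, None, None]]"
definition look2 :: "int \<Rightarrow> int \<Rightarrow> (int \<times> int) option" where
  "look2 s m = (if -5 \<le> s \<and> s \<le> 5 \<and> -4 \<le> m \<and> m \<le> 4 then T2 ! nat (s + 5) ! nat (m + 4) else None)"
definition kf2 :: "int \<Rightarrow> int \<Rightarrow> bool" where "kf2 s m \<longleftrightarrow> look2 s m \<noteq> None"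
definition xh2 :: "int \<Rightarrow> int \<Rightarrow> int" where "xh2 s m = (case look2 s m of Some (a, b) \<Rightarrow> a | None \<Rightarrow> 0)"
definition xl2 :: "int \<Rightarrow> int \<Rightarrow> int" where "xl2 s m = (case look2 s m of Some (a, b) \<Rightarrow> b | None \<Rightarrow> 0)"
definition kl2 :: "(int \<times> int) list" where
  "kl2 = filter (\<lambda>(s, m). kf2 s m) (concat (map (\<lambda>s. map (\<lambda>m. (s, m)) [-4..4]) [-5..5]))"
definition pU2 :: "(int \<times> int \<times> int) list" where
  "pU2 = [(0, 0, 0), (0, 1, 1), (0, 2, 2), (0, 3, 2), (0, 4, 2), (1, 0, 0), (1, 1, 1), (1, 2, 1), (2, 0, 0)]"
definition pP2 :: "(int \<times> int) list" where "pP2 = [(0, 4), (1, 2), (2, 0)]"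

lemma c2_dom: "chk_dom 2 0 pU2 pP2" by code_simp
lemma c2_key: "chk_key 2 6 kf2 kl2 xh2 xl2 pP2" by code_simp
lemma c2_U: "chk_U 2 6 kf2 kl2 xh2 xl2 pU2" by code_simp
lemma c2_L: "chk_L 2 6 kf2 kl2 xh2 xl2 pU2" by code_simp
lemma c2_T: "chk_T 2 6 kl2 xh2 xl2 pP2" by code_simp
lemma c2_tgt: "chk_tgt 2 kl2 xh2 xl2" by code_simp
lemma kl2_ok: "kf2 s m \<Longrightarrow> (s, m) \<in> set kl2"
proof -
  assume h: "kf2 s m"
  have rng: "-5 \<le> s \<and> s \<le> 5 \<and> -4 \<le> m \<and> m \<le> 4"
  proof (rule ccontr)
    assume nc: "\<not> (-5 \<le> s \<and> s \<le> 5 \<and> -4 \<le> m \<and> m \<le> 4)"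
    have "look2 s m = None" unfolding look2_def by (rule if_not_P[OF nc])
    then show False using h unfolding kf2_def by simp
  qed
  have g: "(s, m) \<in> set (concat (map (\<lambda>s. map (\<lambda>m. (s, m)) [-4..4]) [-5..5]))"
    unfolding grid_mem set_upto using rng by simp
  show ?thesis unfolding kl2_def set_filter using g h by simp
qed

interpretation t2: tabchk 2 6 0 kf2 kl2 xh2 xl2 pU2 pP2
  by unfold_locales (use c2_dom c2_key c2_U c2_L c2_T c2_tgt kl2_ok in auto)

lemma p2: "\<bar>int (occ L (factor 2 i n)) - int (occ L (factor 2 j n))\<bar> \<le> 3"
proof (rule t2.balance)
  show "kf2 0 0" by code_simp
  show "xl2 0 0 \<le> 0" by code_simp
  show "0 \<le> xh2 0 0" by code_simp
qed simp

theorem theorem6p1: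
  fixes p i j n :: nat
  assumes "p > 1"
  shows "\<bar>int (occ L (factor p i n)) - int (occ L (factor p j n))\<bar> \<le> 3"
proof -
  consider "p = 2" | "p = 3" | "p = 4" | "p \<ge> 5" using assms by linarith
  then show ?thesis
  proof cases
    case 1 then show ?thesis using p2 by simp
  next
    case 2 then show ?thesis using p3 by simp
  next
    case 3 then show ?thesis using p4 by simp
  next
    case 4 then show ?thesis by (rule big_p)
  qed
qed

end
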